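(* There exists a constant $\Delta T$ (independent of $\alpha$) such that, for all sufficiently large $\alpha$, $T_{\max}\ge\frac1\lambda(\log\alpha+\Delta T)$. Furthermore, for all $t\le\frac1\lambda(\log\alpha+\Delta T)$, $$\Big\|\frac1\alpha e^{\lambda t}\boldsymbol{\theta}(t)-\bar{\boldsymbol{\theta}}_{\mathrm{init}}\Big\|_2=O(\alpha^{-L})\cdot e^{L\lambda t},$$ where the $O(\cdot)$ constant does not depend on $\alpha$ or $t$.
   Context: Regression setting. Training data $\{(\boldsymbol{x}_i,y_i)\}_{i=1}^n$, $y_i\in\mathbb{R}$. Model $f(\boldsymbol{\theta};\boldsymbol{x})$, $\boldsymbol{\theta}\in\mathbb{R}^D$, $\mathcal{C}^2$ and $L$-homogeneous in $\boldsymbol{\theta}$ for every $\boldsymbol{x}$; $f_i(\boldsymbol{\theta}):=f(\boldsymbol{\theta};\boldsymbol{x}_i)$. Fixed $\bar{\boldsymbol{\theta}}_{\mathrm{init}}$ with $f(\bar{\boldsymbol{\theta}}_{\mathrm{init}};\boldsymbol{x})=0$ for all $\boldsymbol{x}$. Loss $\mathcal{L}(\boldsymbol{\theta})=\frac1n\sum_i(f_i(\boldsymbol{\theta})-y_i)^2$, $\mathcal{L}_\lambda=\mathcal{L}+\frac\lambda2\|\boldsymbol{\theta}\|_2^2$, $\lambda=\lambda(\alpha)=\Theta(\alpha^{-p})$ for a constant $p>0$. $\boldsymbol{\theta}(t)$ is the gradient flow $\frac{d\boldsymbol{\theta}}{dt}=-\nabla\mathcal{L}_\lambda(\boldsymbol{\theta})$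 from $\boldsymbol{\theta}(0)=\alpha\bar{\boldsymbol{\theta}}_{\mathrm{init}}$. $\boldsymbol{\Phi}(\boldsymbol{\theta})\in\mathbb{R}^{D\times n}$ has $i$-th column $\nabla f_i(\boldsymbol{\theta})$, $\boldsymbol{K}(\boldsymbol{\theta}):=\boldsymbol{\Phi}(\boldsymbol{\theta})^\top\boldsymbol{\Phi}(\boldsymbol{\theta})$, and $\nu_{\mathrm{ntk}}>0$ is the minimum eigenvalue of $\boldsymbol{K}(\bar{\boldsymbol{\theta}}_{\mathrm{init}})$ (the vectors $\nabla f_i(\bar{\boldsymbol{\theta}}_{\mathrm{init}})$ are assumed linearly independent). $\epsilon_{\max}>0$ is a fixed constant such that $\lambda_{\min}(\boldsymbol{K}(\boldsymbol{\theta}))>\frac{\nu_{\mathrm{ntk}}}{2}$ whenever $\|\boldsymbol{\theta}-\bar{\boldsymbol{\theta}}_{\mathrm{init}}\|_2<\epsilon_{\max}$, and $T_{\max}:=\inf\{t\ge0:\|\frac{e^{\lambda t}}{\alpha}\boldsymbol{\theta}(t)-\bar{\boldsymbol{\theta}}_{\mathrm{init}}\|_2>\epsilon_{\max}\}$. *)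

theory Defs
  imports "HOL-Analysis.Analysis" "HOL-Library.Landau_Symbols"
begin

definition grad :: "('a::euclidean_space \<Rightarrow> real) \<Rightarrow> 'a \<Rightarrow> 'a" where
  "grad g th = (SOME v. (g has_derivative (\<lambda>h. v \<bullet> h)) (at th))"

definition C2 :: "('a::euclidean_space \<Rightarrow> real) \<Rightarrow> bool" where
  "C2 g \<longleftrightarrow> (\<exists>G H. (\<forall>th. (g has_derivative (\<lambda>h. G th \<bullet> h)) (at th))
                 \<and> (\<forall>th. (G has_derivative blinfun_apply (H th)) (at th))
                 \<and> continuous_on UNIV (H :: 'a \<Rightarrow> 'a \<Rightarrow>\<^sub>L 'a))"

definition homogeneous :: "real \<Rightarrow> ('a::real_vector \<Rightarrow> real) \<Rightarrow> bool" where
  "homogeneous L g \<longleftrightarrow> (\<forall>c th. c > 0 \<longrightarrow> g (c *\<^sub>R th) = c powr L * g th)"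

text \<open>Square loss with data index set 'i (n = CARD('i)), f_i(theta) = f theta (xs i).\<close>
definition sqloss :: "('a \<Rightarrow> 'x \<Rightarrow> real) \<Rightarrow> ('i::finite \<Rightarrow> 'x) \<Rightarrow> ('i \<Rightarrow> real) \<Rightarrow> 'a \<Rightarrow> real" where
  "sqloss f xs ys th = (1 / real CARD('i)) * (\<Sum>i\<in>UNIV. (f th (xs i) - ys i)\<^sup>2)"

definition regloss :: "('a::real_normed_vector \<Rightarrow> 'x \<Rightarrow> real) \<Rightarrow> ('i::finite \<Rightarrow> 'x) \<Rightarrow> ('i \<Rightarrow> real)
    \<Rightarrow> real \<Rightarrow> 'a \<Rightarrow> real" where
  "regloss f xs ys lam th = sqloss f xs ys th + lam / 2 * (norm th)\<^sup>2"

definition ntk :: "('a::euclidean_space \<Rightarrow> 'x \<Rightarrow> real) \<Rightarrow> ('i::finite \<Rightarrow> 'x) \<Rightarrow> 'a \<Rightarrow> real^'i^'i" where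
  "ntk f xs th = (\<chi> i j. grad (\<lambda>p. f p (xs i)) th \<bullet> grad (\<lambda>p. f p (xs j)) th)"

definition min_eig :: "real^'i^'i \<Rightarrow> real" where
  "min_eig K = Min {mu. \<exists>v. v \<noteq> 0 \<and> K *v v = mu *\<^sub>R v}"

text \<open>T_max as an extended real (infimum of the empty set is +infinity).\<close>
definition Tmax :: "real \<Rightarrow> real \<Rightarrow> (real \<Rightarrow> 'a::real_normed_vector) \<Rightarrow> 'a \<Rightarrow> real \<Rightarrow> ereal" where
  "Tmax lam alpha th thinit eps =
     Inf (ereal ` {t. t \<ge> 0 \<and> norm ((exp (lam * t) / alpha) *\<^sub>R th t - thinit) > eps})"

end

theory Submission
  imports Defs
begin

lemma grad_eqI:
  fixes g :: "'a::euclidean_space \<Rightarrow> real"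
  assumes "(g has_derivative (\<lambda>h. v \<bullet> h)) (at th)"
  shows "grad g th = v"
proof -
  have ex: "\<exists>v. (g has_derivative (\<lambda>h. v \<bullet> h)) (at th)" using assms by blast
  have "(g has_derivative (\<lambda>h. grad g th \<bullet> h)) (at th)" unfolding grad_def by (rule someI_ex[OF ex])
  then have "(\<lambda>h. grad g th \<bullet> h) = (\<lambda>h. v \<bullet> h)" using assms has_derivative_unique by blast
  then have "grad g th \<bullet> (grad g th - v) = v \<bullet> (grad g th - v)" by metis
  then have "(grad g th - v) \<bullet> (grad g th - v) = 0" by (simp add: inner_diff_left)
  then show ?thesis by simp
qed

lemma C2_grad:
  fixes g :: "'a::euclidean_space \<Rightarrow> real"
  assumes "C2 g"
  shows "\<And>th. (g has_derivative (\<lambda>h. grad g th \<bullet> h)) (at th)" and "continuous_on UNIV (grad g)"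
proof -
  obtain G H where G: "\<forall>th. (g has_derivative (\<lambda>h. G th \<bullet> h)) (at th)"
    and GH: "\<forall>th. (G has_derivative blinfun_apply (H th)) (at th)"
    using assms unfolding C2_def by blast
  have eq: "grad g = G" using G grad_eqI by blast
  show "\<And>th. (g has_derivative (\<lambda>h. grad g th \<bullet> h)) (at th)" using G eq by simp
  show "continuous_on UNIV (grad g)" unfolding eq
    by (meson GH continuous_at_imp_continuous_on has_derivative_continuous)
qed

lemma grad_hom:
  fixes g :: "'a::euclidean_space \<Rightarrow> real"
  assumes "C2 g" "homogeneous L g" "c > 0"
  shows "grad g (c *\<^sub>R th) = c powr (L - 1) *\<^sub>R grad g th"
proof -
  note D = C2_grad(1)[OF assms(1)]
  have d1: "((\<lambda>x. c *\<^sub>R x) has_derivative (\<lambda>h. c *\<^sub>R h)) (at th)"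
    by (intro derivative_eq_intros) auto
  have A: "((\<lambda>x. g (c *\<^sub>R x)) has_derivative (\<lambda>h. grad g (c *\<^sub>R th) \<bullet> (c *\<^sub>R h))) (at th)"
    using has_derivative_compose[OF d1 D] by simp
  have fe: "(\<lambda>x. g (c *\<^sub>R x)) = (\<lambda>x. c powr L * g x)"
    using assms(2,3) unfolding homogeneous_def by auto
  have B: "((\<lambda>x. c powr L * g x) has_derivative (\<lambda>h. c powr L * (grad g th \<bullet> h))) (at th)"
    by (intro has_derivative_mult_right D)
  have eqf: "(\<lambda>h. grad g (c *\<^sub>R th) \<bullet> (c *\<^sub>R h)) = (\<lambda>h. c powr L * (grad g th \<bullet> h))"
    using has_derivative_unique[OF A[unfolded fe] B] .
  then have "\<forall>h. (c *\<^sub>R grad g (c *\<^sub>R th) - c powr L *\<^sub>R grad g th) \<bullet> h = 0"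
  proof (intro allI)
    fix h
    have "grad g (c *\<^sub>R th) \<bullet> (c *\<^sub>R h) = c powr L * (grad g th \<bullet> h)" using eqf by metis
    then show "(c *\<^sub>R grad g (c *\<^sub>R th) - c powr L *\<^sub>R grad g th) \<bullet> h = 0"
      by (simp add: inner_diff_left)
  qed
  then have "c *\<^sub>R grad g (c *\<^sub>R th) = c powr L *\<^sub>R grad g th"
    by (metis eq_iff_diff_eq_0 inner_eq_zero_iff)
  then have "grad g (c *\<^sub>R th) = (c powr L / c) *\<^sub>R grad g th"
  proof -
    have "grad g (c *\<^sub>R th) = (1/c) *\<^sub>R (c *\<^sub>R grad g (c *\<^sub>R th))" using assms(3) by simp
    also have "\<dots> = (c powr L / c) *\<^sub>R grad g th" using \<open>c *\<^sub>R _ = _\<close> by simp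
    finally show ?thesis .
  qed
  moreover have "c powr L / c = c powr (L - 1)" using assms(3) by (simp add: powr_diff)
  ultimately show ?thesis by simp
qed

lemma euler:
  fixes g :: "'a::euclidean_space \<Rightarrow> real"
  assumes "C2 g" "homogeneous L g"
  shows "grad g th \<bullet> th = L * g th"
proof -
  note D = C2_grad(1)[OF assms(1)]
  have d1: "((\<lambda>c::real. c *\<^sub>R th) has_derivative (\<lambda>d. d *\<^sub>R th)) (at 1)"
    by (intro derivative_eq_intros) auto
  have A: "((\<lambda>c. g (c *\<^sub>R th)) has_derivative (\<lambda>d. grad g (1 *\<^sub>R th) \<bullet> (d *\<^sub>R th))) (at 1)"
    using has_derivative_compose[OF d1 D] by simp
  have A': "((\<lambda>c. g (c *\<^sub>R th)) has_field_derivative (grad g th \<bullet> th)) (at 1)"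
  proof -
    have "(\<lambda>d. d * (grad g th \<bullet> th)) = (*) (grad g th \<bullet> th)" by (auto simp: fun_eq_iff)
    then show ?thesis unfolding has_field_derivative_def using A by simp
  qed
  have B: "((\<lambda>c. c powr L * g th) has_field_derivative (L * g th)) (at 1)"
    by (auto intro!: derivative_eq_intros)
  have B': "((\<lambda>c. g (c *\<^sub>R th)) has_field_derivative (L * g th)) (at 1)"
    apply (rule has_field_derivative_transform_within_open[OF B, of "{0<..}"])
    using assms(2) unfolding homogeneous_def by auto
  show ?thesis using DERIV_unique[OF A' B'] .
qed

lemma sq_sum_deriv:
  fixes f :: "'a::euclidean_space \<Rightarrow> 'x \<Rightarrow> real" and xs :: "'i::finite \<Rightarrow> 'x"
  assumes D: "\<And>i. ((\<lambda>th. f th (xs i)) has_derivative (\<lambda>h. G i \<bullet> h)) (at th)"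
  shows "((\<lambda>th. (\<Sum>i\<in>UNIV. (f th (xs i) - ys i)^2)) has_derivative (\<lambda>h. (\<Sum>i\<in>UNIV. 2 * (f th (xs i) - ys i) * (G i \<bullet> h)))) (at th)"
  apply (rule has_derivative_eq_rhs)
   apply (rule has_derivative_sum)
  apply (rule has_derivative_power)
   apply (rule has_derivative_diff)
  apply (rule D)
  apply (rule has_derivative_const)
  apply (auto simp: fun_eq_iff intro!: sum.cong)
  done

lemma regloss_grad:
  fixes f :: "'a::euclidean_space \<Rightarrow> 'x \<Rightarrow> real" and xs :: "'i::finite \<Rightarrow> 'x"
  assumes "\<And>x. C2 (\<lambda>th. f th x)"
  shows "grad (regloss f xs ys lam) th = (2 / real CARD('i)) *\<^sub>R (\<Sum>i\<in>UNIV. (f th (xs i) - ys i) *\<^sub>R grad (\<lambda>th. f th (xs i)) th) + lam *\<^sub>R th"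
proof (rule grad_eqI)
  have D: "\<And>i. ((\<lambda>th. f th (xs i)) has_derivative (\<lambda>h. grad (\<lambda>th. f th (xs i)) th \<bullet> h)) (at th)"
    using C2_grad(1)[OF assms] .
  have e: "regloss f xs ys lam = (\<lambda>th. (1/real CARD('i)) * (\<Sum>i\<in>UNIV. (f th (xs i) - ys i)^2) + lam/2 * (th \<bullet> th))"
    by (auto simp: fun_eq_iff regloss_def sqloss_def power2_norm_eq_inner)
  have S: "((\<lambda>th. (\<Sum>i\<in>UNIV. (f th (xs i) - ys i)^2)) has_derivative (\<lambda>h. (\<Sum>i\<in>UNIV. 2 * (f th (xs i) - ys i) * (grad (\<lambda>th. f th (xs i)) th \<bullet> h)))) (at th)"
    by (rule sq_sum_deriv) (rule D)
  have I: "((\<lambda>th. th \<bullet> th) has_derivative (\<lambda>h. th \<bullet> h + h \<bullet> th)) (at th)"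
    by (rule has_derivative_inner[OF has_derivative_ident has_derivative_ident])
  show "(regloss f xs ys lam has_derivative (\<lambda>h. ((2 / real CARD('i)) *\<^sub>R (\<Sum>i\<in>UNIV. (f th (xs i) - ys i) *\<^sub>R grad (\<lambda>th. f th (xs i)) th) + lam *\<^sub>R th) \<bullet> h)) (at th)"
    unfolding e
    apply (rule has_derivative_eq_rhs)
     apply (rule has_derivative_add)
      apply (rule has_derivative_mult_right[OF S])
     apply (rule has_derivative_mult_right[OF I])
  proof (rule ext)
    fix h
    have "(\<Sum>i\<in>UNIV. 2 * (f th (xs i) - ys i) * (grad (\<lambda>th. f th (xs i)) th \<bullet> h))
        = 2 * (\<Sum>i\<in>UNIV. (f th (xs i) - ys i) * (grad (\<lambda>th. f th (xs i)) th \<bullet> h))"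
      by (simp add: sum_distrib_left; intro sum.cong; simp add: algebra_simps)
    then show "1 / real CARD('i) * (\<Sum>i\<in>UNIV. 2 * (f th (xs i) - ys i) * (grad (\<lambda>th. f th (xs i)) th \<bullet> h)) +
          lam / 2 * (th \<bullet> h + h \<bullet> th) =
          ((2 / real CARD('i)) *\<^sub>R (\<Sum>i\<in>UNIV. (f th (xs i) - ys i) *\<^sub>R grad (\<lambda>th. f th (xs i)) th) + lam *\<^sub>R th) \<bullet> h"
      by (simp add: inner_add_left inner_sum_left inner_commute[of h th])
  qed
qed



lemma indep_nonzero:
  fixes G :: "'i::finite \<Rightarrow> 'a::euclidean_space"
  assumes indep: "\<not> dependent (range G)" and inj: "inj G"
    and v: "v \<noteq> 0"
  shows "(\<Sum>i\<in>UNIV. v $ i *\<^sub>R G i) \<noteq> 0"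
proof
  assume z: "(\<Sum>i\<in>UNIV. v $ i *\<^sub>R G i) = 0"
  obtain j where j: "v $ j \<noteq> 0" using v by (metis vec_eq_iff zero_index)
  define u where "u x = v $ (inv G x)" for x
  have "(\<Sum>x\<in>range G. u x *\<^sub>R x) = (\<Sum>i\<in>UNIV. u (G i) *\<^sub>R G i)"
    using inj by (simp add: sum.reindex)
  also have "\<dots> = (\<Sum>i\<in>UNIV. v $ i *\<^sub>R G i)" using inj by (simp add: u_def)
  finally have s0: "(\<Sum>x\<in>range G. u x *\<^sub>R x) = 0" using z by simp
  have "u (G j) \<noteq> 0" using inj j by (simp add: u_def)
  then have "dependent (range G)"
    using s0 by (subst dependent_finite) auto
  then show False using indep by simp
qed

lemma norm_vec_sum:
  fixes v :: "real^'i::finite"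
  shows "norm (\<Sum>i\<in>UNIV. v $ i *\<^sub>R (G i :: 'a::real_normed_vector)) \<le> norm v * (\<Sum>i\<in>UNIV. norm (G i))"
proof -
  have "norm (\<Sum>i\<in>UNIV. v $ i *\<^sub>R G i) \<le> (\<Sum>i\<in>UNIV. norm (v $ i *\<^sub>R G i))" by (rule norm_sum)
  also have "\<dots> = (\<Sum>i\<in>UNIV. \<bar>v $ i\<bar> * norm (G i))" by simp
  also have "\<dots> \<le> (\<Sum>i\<in>UNIV. norm v * norm (G i))"
    by (intro sum_mono mult_right_mono component_le_norm_cart) auto
  finally show ?thesis by (simp add: sum_distrib_left)
qed

lemma indep_bound:
  fixes G :: "'i::finite \<Rightarrow> 'a \<Rightarrow> 'a::euclidean_space"
  assumes cont: "\<And>i. continuous_on UNIV (G i)"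
    and indep: "\<not> dependent (range (\<lambda>i. G i th0))" and inj: "inj (\<lambda>i. G i th0)"
  shows "\<exists>\<delta>>0. \<exists>\<nu>>0. \<exists>M>0. \<forall>ph. norm (ph - th0) < \<delta> \<longrightarrow> (\<forall>v::real^'i.
      \<nu> * norm v \<le> norm (\<Sum>i\<in>UNIV. v $ i *\<^sub>R G i ph) \<and> norm (\<Sum>i\<in>UNIV. v $ i *\<^sub>R G i ph) \<le> M * norm v)"
proof -
  define F where "F v = norm (\<Sum>i\<in>UNIV. v $ i *\<^sub>R G i th0)" for v :: "real^'i"
  have cF: "continuous_on (sphere 0 1) F" unfolding F_def by (intro continuous_intros)
  have "compact (F ` sphere 0 1)" by (rule compact_continuous_image[OF cF compact_sphere])
  moreover have "F ` sphere 0 1 \<noteq> {}"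
  proof -
    obtain x :: "real^'i" where "norm x = 1" using vector_choose_size[of 1] by auto
    then have "x \<in> sphere 0 1" by simp
    then show ?thesis by blast
  qed
  ultimately obtain m0 where m0: "m0 \<in> F ` sphere 0 1" and m0le: "\<forall>t\<in>F ` sphere 0 1. m0 \<le> t"
    using compact_attains_inf by blast
  obtain v0 where v0: "v0 \<in> sphere (0::real^'i) 1" "m0 = F v0" using m0 by blast
  have "v0 \<noteq> 0" using v0 by auto
  then have m0pos: "m0 > 0" using v0 indep_nonzero[OF indep inj] unfolding F_def by auto
  have Flow: "m0 * norm v \<le> F v" for v
  proof (cases "v = 0")
    case True then show ?thesis by (simp add: F_def)
  next
    case False
    then have "(1 / norm v) *\<^sub>R v \<in> sphere 0 1" by simp
    then have "m0 \<le> F ((1 / norm v) *\<^sub>R v)" using m0le by blast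
    also have "F ((1 / norm v) *\<^sub>R v) = F v / norm v"
    proof -
      have "(\<Sum>i\<in>UNIV. ((1 / norm v) *\<^sub>R v) $ i *\<^sub>R G i th0) = (1 / norm v) *\<^sub>R (\<Sum>i\<in>UNIV. v $ i *\<^sub>R G i th0)"
        by (simp add: scaleR_sum_right)
      then show ?thesis unfolding F_def by simp
    qed
    finally show ?thesis using False by (simp add: field_simps)
  qed
  define E where "E ph = (\<Sum>i\<in>UNIV. norm (G i ph - G i th0))" for ph
  have cE: "isCont E th0" unfolding E_def
    using cont by (intro continuous_intros) (auto simp: continuous_on_eq_continuous_at)
  have E0: "E th0 = 0" by (simp add: E_def)
  obtain \<delta> where d: "\<delta> > 0" "\<forall>x'. dist x' th0 < \<delta> \<longrightarrow> dist (E x') (E th0) < m0 / 2"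
    using cE m0pos unfolding continuous_at_eps_delta by (meson half_gt_zero)
  define M where "M = (\<Sum>i\<in>UNIV. norm (G i th0)) + m0 / 2"
  have Mpos: "M > 0" unfolding M_def using m0pos by (simp add: sum_nonneg add_nonneg_pos)
  have h2: "m0 / 2 > 0" using m0pos by simp
  have main: "m0 / 2 * norm v \<le> norm (\<Sum>i\<in>UNIV. v $ i *\<^sub>R G i ph) \<and> norm (\<Sum>i\<in>UNIV. v $ i *\<^sub>R G i ph) \<le> M * norm v"
    if ph: "norm (ph - th0) < \<delta>" for ph and v :: "real^'i"
  proof
    have Enn: "E ph \<ge> 0" unfolding E_def by (simp add: sum_nonneg)
    have "dist (E ph) (E th0) < m0 / 2" using d(2) ph by (simp add: dist_norm)
    then have Eph: "E ph < m0 / 2" using E0 Enn by (simp add: dist_real_def)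
    have dif: "(\<Sum>i\<in>UNIV. v $ i *\<^sub>R G i ph) = (\<Sum>i\<in>UNIV. v $ i *\<^sub>R G i th0) + (\<Sum>i\<in>UNIV. v $ i *\<^sub>R (G i ph - G i th0))"
      by (simp add: sum.distrib[symmetric] scaleR_diff_right)
    have nd: "norm (\<Sum>i\<in>UNIV. v $ i *\<^sub>R (G i ph - G i th0)) \<le> norm v * E ph"
      unfolding E_def by (rule norm_vec_sum)
    have "m0 * norm v - norm v * E ph \<le> norm (\<Sum>i\<in>UNIV. v $ i *\<^sub>R G i ph)"
      using Flow[of v] nd unfolding dif F_def
      by (smt (verit) norm_triangle_ineq4 norm_minus_commute add_diff_cancel_right' norm_diff_ineq)
    moreover have "norm v * E ph \<le> norm v * (m0/2)" using Eph by (intro mult_left_mono) auto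
    ultimately show "m0 / 2 * norm v \<le> norm (\<Sum>i\<in>UNIV. v $ i *\<^sub>R G i ph)" by (simp add: algebra_simps)
    have "norm (\<Sum>i\<in>UNIV. v $ i *\<^sub>R G i th0) \<le> norm v * (\<Sum>i\<in>UNIV. norm (G i th0))" by (rule norm_vec_sum)
    then have "norm (\<Sum>i\<in>UNIV. v $ i *\<^sub>R G i ph) \<le> norm v * (\<Sum>i\<in>UNIV. norm (G i th0)) + norm v * E ph"
      using nd unfolding dif by (smt (verit) norm_triangle_ineq)
    also have "\<dots> \<le> M * norm v"
    proof -
      have "norm v * E ph \<le> norm v * (m0/2)" using Eph by (intro mult_left_mono) auto
      then show ?thesis unfolding M_def by (simp add: algebra_simps)
    qed
    finally show "norm (\<Sum>i\<in>UNIV. v $ i *\<^sub>R G i ph) \<le> M * norm v" .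
  qed
  show ?thesis using main d(1) Mpos h2 by blast
qed



lemma vd_inner_self:
  assumes "(w has_vector_derivative w') (at x within S)"
  shows "((\<lambda>t. w t \<bullet> w t) has_real_derivative (2 * (w x \<bullet> w'))) (at x within S)"
proof -
  have "((\<lambda>t. w t \<bullet> w t) has_derivative (\<lambda>h. w x \<bullet> (h *\<^sub>R w') + (h *\<^sub>R w') \<bullet> w x)) (at x within S)"
    using has_derivative_inner[OF assms[unfolded has_vector_derivative_def] assms[unfolded has_vector_derivative_def]] .
  moreover have "(\<lambda>h. w x \<bullet> (h *\<^sub>R w') + (h *\<^sub>R w') \<bullet> w x) = (*) (2 * (w x \<bullet> w'))"
    by (auto simp: fun_eq_iff inner_commute algebra_simps)
  ultimately show ?thesis unfolding has_field_derivative_def by simp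
qed

lemma chain_vd:
  assumes "(g has_derivative (\<lambda>h. v \<bullet> h)) (at (th x))" "(th has_vector_derivative th') (at x within S)"
  shows "((\<lambda>t. g (th t)) has_real_derivative (v \<bullet> th')) (at x within S)"
proof -
  have "((\<lambda>t. g (th t)) has_derivative (\<lambda>d. v \<bullet> (d *\<^sub>R th'))) (at x within S)"
    using has_derivative_compose[OF assms(2)[unfolded has_vector_derivative_def] assms(1)] .
  moreover have "(\<lambda>d. v \<bullet> (d *\<^sub>R th')) = (*) (v \<bullet> th')" by (auto simp: fun_eq_iff)
  ultimately show ?thesis unfolding has_field_derivative_def by simp
qed

lemma sqrt_facts:
  fixes x e :: real
  assumes "e > 0" "x \<ge> 0"
  shows "x \<le> sqrt (x\<^sup>2 + e\<^sup>2)" "e \<le> sqrt (x\<^sup>2 + e\<^sup>2)" "sqrt (x\<^sup>2 + e\<^sup>2) \<le> x + e"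
    "sqrt (x\<^sup>2 + e\<^sup>2) - e \<le> x\<^sup>2 / sqrt (x\<^sup>2 + e\<^sup>2)"
proof -
  show a: "x \<le> sqrt (x\<^sup>2 + e\<^sup>2)" by (rule real_le_rsqrt) simp
  show b: "e \<le> sqrt (x\<^sup>2 + e\<^sup>2)" by (rule real_le_rsqrt) simp
  show "sqrt (x\<^sup>2 + e\<^sup>2) \<le> x + e"
    by (rule real_le_lsqrt) (use assms in \<open>auto simp: power2_eq_square algebra_simps\<close>)
  define N where "N = sqrt (x\<^sup>2 + e\<^sup>2)"
  have Np: "N > 0" using b assms unfolding N_def by linarith
  have NN: "N\<^sup>2 = x\<^sup>2 + e\<^sup>2" unfolding N_def by simp
  have "x\<^sup>2 / N = N - e\<^sup>2 / N" using Np NN by (simp add: field_simps power2_eq_square)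
  moreover have "e\<^sup>2 / N \<le> e" using Np b assms unfolding N_def[symmetric]
    by (simp add: divide_le_eq power2_eq_square mult_left_mono)
  ultimately show "sqrt (x\<^sup>2 + e\<^sup>2) - e \<le> x\<^sup>2 / sqrt (x\<^sup>2 + e\<^sup>2)" unfolding N_def by linarith
qed

lemma inv_half_2: "inverse (N::real) / 2 * (2 * X) = X / N"
proof -
  have "inverse N / 2 * (2 * X) = inverse N * X" by simp
  also have "\<dots> = X / N" by (simp add: inverse_eq_divide)
  finally show ?thesis .
qed
lemma inv_half_1: "inverse (N::real) / 2 * (2 * X + 0) = X / N"
  using inv_half_2 by simp

lemma final_arith:
  fixes l e1 Nw X1 c L E Nr X2 yn \<epsilon> K n A \<nu> \<sigma> M :: real
  assumes e1: "e1 > 0" and cE: "c * E > 0"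
    and h1: "X1 \<le> (2/n)*A - l*(Nw - \<epsilon>)"
    and h2: "X2 \<le> -(2/n)*\<nu>*\<sigma>*A + (2/n)*\<nu>*M*\<sigma>\<^sup>2*\<epsilon> - l*L*(Nr - \<epsilon>) + l*L*yn"
    and h3: "c * E * \<nu> * \<sigma> = e1"
    and hK: "e1 * l + c * E * ((2 / n) * \<nu> * M * \<sigma>\<^sup>2) + c * E * (l * L) \<le> K"
    and \<epsilon>: "\<epsilon> > 0"
  shows "l * e1 * Nw + e1 * X1 + c * (L * l * E) * Nr + c * E * X2 - c * yn * (L * l * E) - \<epsilon> * K \<le> 0"
proof -
  have m1: "e1 * X1 \<le> e1 * ((2/n)*A - l*(Nw - \<epsilon>))" using h1 e1 by (simp add: mult_left_mono)
  have m2: "c * E * X2 \<le> c * E * (-(2/n)*\<nu>*\<sigma>*A + (2/n)*\<nu>*M*\<sigma>\<^sup>2*\<epsilon> - l*L*(Nr - \<epsilon>) + l*L*yn)"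
    using h2 cE by (simp add: mult_left_mono)
  have "l * e1 * Nw + e1 * X1 + c * (L * l * E) * Nr + c * E * X2 - c * yn * (L * l * E) - \<epsilon> * K
     \<le> l * e1 * Nw + e1 * ((2/n)*A - l*(Nw - \<epsilon>)) + c * (L * l * E) * Nr
        + c * E * (-(2/n)*\<nu>*\<sigma>*A + (2/n)*\<nu>*M*\<sigma>\<^sup>2*\<epsilon> - l*L*(Nr - \<epsilon>) + l*L*yn) - c * yn * (L * l * E) - \<epsilon> * K"
    using m1 m2 by linarith
  also have "\<dots> = \<epsilon> * (e1 * l + c * E * ((2 / n) * \<nu> * M * \<sigma>\<^sup>2) + c * E * (l * L)) - \<epsilon> * K + (2/n)*A*(e1 - c * E * \<nu> * \<sigma>)"
    by (simp add: algebra_simps)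
  also have "\<dots> \<le> 0"
  proof -
    have "\<epsilon> * (e1 * l + c * E * ((2 / n) * \<nu> * M * \<sigma>\<^sup>2) + c * E * (l * L)) \<le> \<epsilon> * K"
      using hK \<epsilon> by (simp add: mult_left_mono)
    then show ?thesis using h3 by simp
  qed
  finally show ?thesis .
qed
lemma term1:
  fixes ww wn A Nw \<epsilon> l n :: real
  assumes "n > 0" "l > 0" "Nw > 0" "wn \<ge> 0" "A \<ge> 0" "wn \<le> Nw" "Nw - \<epsilon> \<le> wn\<^sup>2 / Nw"
    and ww: "ww \<le> (2/n)*wn*A - l*wn\<^sup>2"
  shows "ww / Nw \<le> (2/n)*A - l*(Nw - \<epsilon>)"
proof -
  have "ww / Nw \<le> ((2/n)*wn*A - l*wn\<^sup>2) / Nw" using ww assms(3) by (simp add: divide_right_mono)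
  also have "\<dots> = (2/n)*A*(wn/Nw) - l*(wn\<^sup>2/Nw)" by (simp add: diff_divide_distrib)
  also have "\<dots> \<le> (2/n)*A - l*(Nw - \<epsilon>)"
  proof -
    have "wn / Nw \<le> 1" using assms by simp
    then have "(2/n)*A*(wn/Nw) \<le> (2/n)*A" by (rule mult_left_le) (use assms in auto)
    moreover have "l*(Nw - \<epsilon>) \<le> l*(wn\<^sup>2/Nw)" by (rule mult_left_mono) (use assms in auto)
    ultimately show ?thesis by linarith
  qed
  finally show ?thesis .
qed

lemma term2:
  fixes S A rn Nr ry yn \<epsilon> l L n \<nu> \<sigma> M :: real
  assumes n: "n > 0" and l: "l > 0" and L: "L \<ge> 0" and Nr: "Nr > 0" and rn: "rn \<ge> 0" and \<nu>: "\<nu> > 0" and \<sigma>: "\<sigma> > 0" and M: "M > 0"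
    and yn: "yn \<ge> 0" and \<epsilon>: "\<epsilon> > 0"
    and S: "S = -(2/n)*A\<^sup>2 - l*L*(rn\<^sup>2 + ry)" and ry: "ry \<ge> - (rn*yn)"
    and Al: "\<nu>*\<sigma>*rn \<le> A" and Au: "A \<le> M*\<sigma>*rn"
    and r1: "rn \<le> Nr" and r2: "Nr - rn \<le> \<epsilon>" and r3: "Nr - \<epsilon> \<le> rn\<^sup>2 / Nr"
  shows "S / Nr \<le> -(2/n)*\<nu>*\<sigma>*A + (2/n)*\<nu>*M*\<sigma>\<^sup>2*\<epsilon> - l*L*(Nr - \<epsilon>) + l*L*yn"
proof -
  have "\<nu>*\<sigma>*rn \<ge> 0" using \<nu> \<sigma> rn by simp
  then have A0: "A \<ge> 0" using Al by linarith
  have eq: "S / Nr = -(2/n)*(A\<^sup>2/Nr) - l*L*(rn\<^sup>2/Nr) - l*L*(ry/Nr)"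
    unfolding S using Nr n by (simp add: field_simps)
  have k1: "A\<^sup>2/Nr \<ge> \<nu>*\<sigma>*A - \<nu>*M*\<sigma>\<^sup>2*\<epsilon>"
  proof -
    have "A*(Nr - rn) \<le> A*\<epsilon>" using r2 A0 by (simp add: mult_left_mono)
    also have "A*\<epsilon> \<le> (M*\<sigma>*rn)*\<epsilon>" using Au \<epsilon> by (simp add: mult_right_mono)
    also have "(M*\<sigma>*rn)*\<epsilon> \<le> (M*\<sigma>*Nr)*\<epsilon>"
      using M r1 \<sigma> \<epsilon> by (intro mult_right_mono mult_left_mono) auto
    finally have "A*(Nr - rn) \<le> (M*\<sigma>*\<epsilon>)*Nr" by (simp add: mult_ac)
    then have "A*Nr - (M*\<sigma>*\<epsilon>)*Nr \<le> A*rn" by (simp add: algebra_simps)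
    then have a1: "A - M*\<sigma>*\<epsilon> \<le> A*rn/Nr" using Nr by (simp add: field_simps)
    have "\<nu>*\<sigma>*rn*A \<le> A*A" using Al A0 by (simp add: mult_right_mono)
    then have "\<nu>*\<sigma>*(A*rn/Nr) \<le> A\<^sup>2/Nr" using Nr by (simp add: field_simps power2_eq_square)
    moreover have "\<nu>*\<sigma>*(A - M*\<sigma>*\<epsilon>) \<le> \<nu>*\<sigma>*(A*rn/Nr)" by (rule mult_left_mono[OF a1]) (use \<nu> \<sigma> in simp)
    ultimately have "\<nu>*\<sigma>*(A - M*\<sigma>*\<epsilon>) \<le> A\<^sup>2/Nr" by linarith
    then show ?thesis by (simp add: algebra_simps power2_eq_square)
  qed
  have k3: "- (ry/Nr) \<le> yn"
  proof -
    have "rn*yn \<le> Nr*yn" using r1 yn by (rule mult_right_mono)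
    then have "-ry \<le> Nr*yn" using ry by linarith
    then show ?thesis using Nr by (simp add: field_simps)
  qed
  have lL: "l*L \<ge> 0" using l L by simp
  have "(2/n)*(\<nu>*\<sigma>*A - \<nu>*M*\<sigma>\<^sup>2*\<epsilon>) \<le> (2/n)*(A\<^sup>2/Nr)" by (rule mult_left_mono[OF k1]) (use n in simp)
  then have "-(2/n)*(A\<^sup>2/Nr) \<le> -(2/n)*(\<nu>*\<sigma>*A - \<nu>*M*\<sigma>\<^sup>2*\<epsilon>)" by linarith
  moreover have "- (l*L*(rn\<^sup>2/Nr)) \<le> - (l*L*(Nr - \<epsilon>))"
  proof -
    have "l*L*(Nr - \<epsilon>) \<le> l*L*(rn\<^sup>2/Nr)" by (rule mult_left_mono[OF r3 lL])
    then show ?thesis by linarith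
  qed
  moreover have "- (l*L*(ry/Nr)) \<le> l*L*yn" proof -
    have "l*L*(- (ry/Nr)) \<le> l*L*yn" by (rule mult_left_mono[OF k3 lL])
    then show ?thesis by simp
  qed
  ultimately have "S / Nr \<le> -(2/n)*(\<nu>*\<sigma>*A - \<nu>*M*\<sigma>\<^sup>2*\<epsilon>) - l*L*(Nr - \<epsilon>) + l*L*yn"
    unfolding eq by linarith
  then show ?thesis by (simp add: algebra_simps)
qed


lemma main_est:
  fixes \<theta> :: "real \<Rightarrow> 'a::euclidean_space" and f :: "'i::finite \<Rightarrow> 'a \<Rightarrow> real"
    and G :: "'i \<Rightarrow> 'a \<Rightarrow> 'a" and y :: "'i \<Rightarrow> real" and th0 :: 'a
    and \<alpha> l L \<nu> M \<delta> t :: real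
  assumes \<alpha>: "\<alpha> > 0" and l: "l > 0" and \<nu>: "\<nu> > 0" and M: "M > 0" and Lpos: "L > 0"
    and fder: "\<And>i x. (f i has_derivative (\<lambda>h. G i x \<bullet> h)) (at x)"
    and Ghom: "\<And>i c x. c > 0 \<Longrightarrow> G i (c *\<^sub>R x) = c powr (L - 1) *\<^sub>R G i x"
    and euler: "\<And>i x. G i x \<bullet> x = L * f i x"
    and f0: "\<And>i. f i (\<alpha> *\<^sub>R th0) = 0"
    and flow: "\<And>\<tau>. \<tau> \<ge> 0 \<Longrightarrow> (\<theta> has_vector_derivative
        - ((2 / real CARD('i)) *\<^sub>R (\<Sum>i\<in>UNIV. (f i (\<theta> \<tau>) - y i) *\<^sub>R G i (\<theta> \<tau>)) + l *\<^sub>R \<theta> \<tau>)) (at \<tau> within {0..})"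
    and init: "\<theta> 0 = \<alpha> *\<^sub>R th0"
    and bnd: "\<And>ph v. norm (ph - th0) < \<delta> \<Longrightarrow>
        \<nu> * norm v \<le> norm (\<Sum>i\<in>UNIV. v $ i *\<^sub>R G i ph) \<and> norm (\<Sum>i\<in>UNIV. v $ i *\<^sub>R G i ph) \<le> M * norm v"
    and t: "t \<ge> 0"
    and ball: "\<And>\<tau>. 0 < \<tau> \<Longrightarrow> \<tau> < t \<Longrightarrow> norm ((exp (l * \<tau>) / \<alpha>) *\<^sub>R \<theta> \<tau> - th0) < \<delta>"
  shows "norm ((exp (l * t) / \<alpha>) *\<^sub>R \<theta> t - th0) \<le> (norm (\<chi> i. y i) / \<nu>) * \<alpha> powr (- L) * exp (L * l * t)"
proof -
  define n where "n = real CARD('i)"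
  have n: "n > 0" unfolding n_def by simp
  define s where "s \<tau> = \<alpha> * exp (- (l * \<tau>))" for \<tau>
  define \<sigma> where "\<sigma> \<tau> = s \<tau> powr (L - 1)" for \<tau>
  define w where "w \<tau> = \<theta> \<tau> - s \<tau> *\<^sub>R th0" for \<tau>
  define r where "r i \<tau> = f i (\<theta> \<tau>) - y i" for i \<tau>
  define V where "V \<tau> = (\<Sum>i\<in>UNIV. r i \<tau> *\<^sub>R G i (\<theta> \<tau>))" for \<tau>
  define A where "A \<tau> = norm (V \<tau>)" for \<tau>
  define rn where "rn \<tau> = sqrt (\<Sum>i\<in>UNIV. (r i \<tau>)\<^sup>2)" for \<tau>
  define yn where "yn = norm (\<chi> i. y i)"
  define c where "c = \<alpha> powr (1 - L) / \<nu>"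
  define th' where "th' \<tau> = - ((2 / n) *\<^sub>R V \<tau> + l *\<^sub>R \<theta> \<tau>)" for \<tau>
  define w' where "w' \<tau> = - ((2 / n) *\<^sub>R V \<tau> + l *\<^sub>R w \<tau>)" for \<tau>
  define Bd where "Bd \<tau> = exp (l * \<tau>) * l + c * exp (L * l * \<tau>) * ((2 / n) * \<nu> * M * (\<sigma> \<tau>)\<^sup>2) + c * exp (L * l * \<tau>) * (l * L)" for \<tau>
  have spos: "s \<tau> > 0" for \<tau> unfolding s_def using \<alpha> by simp
  have cpos: "c > 0" unfolding c_def using \<alpha> \<nu> by simp
  have ynn: "yn \<ge> 0" unfolding yn_def by simp
  have yn_eq: "yn = sqrt (\<Sum>i\<in>UNIV. (y i)\<^sup>2)" unfolding yn_def norm_vec_def L2_set_def by simp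
  have rn_eq: "rn \<tau> = norm (\<chi> i. r i \<tau>)" for \<tau> unfolding rn_def norm_vec_def L2_set_def by simp
  have rnn: "rn \<tau> \<ge> 0" for \<tau> unfolding rn_def by (simp add: sum_nonneg)
  have cBd: "continuous_on {0..t} Bd" unfolding Bd_def \<sigma>_def s_def using \<alpha>
    by (intro continuous_intros) auto
  obtain K where K: "\<And>\<tau>. \<tau> \<in> {0..t} \<Longrightarrow> Bd \<tau> \<le> K" and Knn: "K \<ge> 0"
  proof -
    have "bounded (Bd ` {0..t})" by (rule compact_imp_bounded[OF compact_continuous_image[OF cBd compact_Icc]])
    then obtain B where B: "\<forall>x\<in>Bd ` {0..t}. norm x \<le> B" unfolding bounded_iff by blast
    have "Bd \<tau> \<le> max B 0" if "\<tau> \<in> {0..t}" for \<tau>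
    proof -
      have "norm (Bd \<tau>) \<le> B" using B that by blast
      then show ?thesis by (simp add: abs_le_iff)
    qed
    then show ?thesis using that[of "max B 0"] by simp
  qed
  have dth: "(\<theta> has_vector_derivative th' \<tau>) (at \<tau> within {0..})" if "\<tau> \<ge> 0" for \<tau>
    using flow[OF that] unfolding th'_def V_def r_def n_def .
  have dw: "(w has_vector_derivative w' \<tau>) (at \<tau> within {0..})" if "\<tau> \<ge> 0" for \<tau>
  proof -
    have ds: "(s has_real_derivative (- l * s \<tau>)) (at \<tau> within {0..})"
      unfolding s_def by (auto intro!: derivative_eq_intros)
    have "((\<lambda>\<tau>. s \<tau> *\<^sub>R th0) has_vector_derivative ((- l * s \<tau>) *\<^sub>R th0)) (at \<tau> within {0..})"
      using has_vector_derivative_scaleR[OF ds has_vector_derivative_const[of th0]] by simp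
    from has_vector_derivative_diff[OF dth[OF that] this]
    have "((\<lambda>\<tau>. \<theta> \<tau> - s \<tau> *\<^sub>R th0) has_vector_derivative (th' \<tau> - (- l * s \<tau>) *\<^sub>R th0)) (at \<tau> within {0..})" .
    moreover have "(\<lambda>\<tau>. \<theta> \<tau> - s \<tau> *\<^sub>R th0) = w" by (rule ext) (simp add: w_def)
    moreover have "th' \<tau> - (- l * s \<tau>) *\<^sub>R th0 = w' \<tau>"
      unfolding th'_def w'_def w_def by (simp add: algebra_simps scaleR_diff_right)
    ultimately show ?thesis by simp
  qed
  have dr: "((r i) has_real_derivative (G i (\<theta> \<tau>) \<bullet> th' \<tau>)) (at \<tau> within {0..})" if "\<tau> \<ge> 0" for i \<tau>
  proof -
    have "((\<lambda>t. f i (\<theta> t) - y i) has_real_derivative (G i (\<theta> \<tau>) \<bullet> th' \<tau> - 0)) (at \<tau> within {0..})"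
      by (rule DERIV_diff[OF chain_vd[OF fder dth[OF that]] DERIV_const])
    moreover have "(\<lambda>t. f i (\<theta> t) - y i) = r i" by (rule ext) (simp add: r_def)
    ultimately show ?thesis by simp
  qed
  have main_eps: "exp (l * t) * norm (w t) \<le> c * yn * exp (L * l * t) + \<epsilon> * (1 + c + K * t)" if \<epsilon>: "\<epsilon> > 0" for \<epsilon>
  proof -
    define Nw where "Nw \<tau> = sqrt ((norm (w \<tau>))\<^sup>2 + \<epsilon>\<^sup>2)" for \<tau>
    define Nr where "Nr \<tau> = sqrt ((rn \<tau>)\<^sup>2 + \<epsilon>\<^sup>2)" for \<tau>
    define D where "D \<tau> = exp (l * \<tau>) * Nw \<tau> + c * (exp (L * l * \<tau>) * Nr \<tau>) - c * yn * exp (L * l * \<tau>) - \<epsilon> * K * \<tau>" for \<tau>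
    define D' where "D' \<tau> = l * exp (l * \<tau>) * Nw \<tau> + exp (l * \<tau>) * ((w \<tau> \<bullet> w' \<tau>) / Nw \<tau>)
       + c * (L * l * exp (L * l * \<tau>)) * Nr \<tau> + c * exp (L * l * \<tau>) * ((\<Sum>i\<in>UNIV. r i \<tau> * (G i (\<theta> \<tau>) \<bullet> th' \<tau>)) / Nr \<tau>)
       - c * yn * (L * l * exp (L * l * \<tau>)) - \<epsilon> * K" for \<tau>
    have dD: "(D has_real_derivative D' \<tau>) (at \<tau> within {0..})" if "\<tau> \<ge> 0" for \<tau>
    proof -
      have Nwp: "(norm (w \<tau>))\<^sup>2 + \<epsilon>\<^sup>2 > 0" by (rule add_nonneg_pos) (use \<epsilon> in auto)
      have dww: "((\<lambda>t. (norm (w t))\<^sup>2 + \<epsilon>\<^sup>2) has_real_derivative (2 * (w \<tau> \<bullet> w' \<tau>) + 0)) (at \<tau> within {0..})"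
        unfolding power2_norm_eq_inner by (rule DERIV_add[OF vd_inner_self[OF dw[OF that]] DERIV_const])
      have dNw: "(Nw has_real_derivative (inverse (Nw \<tau>) / 2 * (2 * (w \<tau> \<bullet> w' \<tau>) + 0))) (at \<tau> within {0..})"
        using DERIV_chain2[OF DERIV_real_sqrt[OF Nwp] dww] unfolding Nw_def[abs_def] by simp
      have Nrp: "(rn \<tau>)\<^sup>2 + \<epsilon>\<^sup>2 > 0" by (rule add_nonneg_pos) (use \<epsilon> in auto)
      have rn2: "(\<lambda>t. (rn t)\<^sup>2 + \<epsilon>\<^sup>2) = (\<lambda>t. (\<Sum>i\<in>UNIV. (r i t)\<^sup>2) + \<epsilon>\<^sup>2)"
        unfolding rn_def by (simp add: sum_nonneg)
      have drr: "((\<lambda>t. (rn t)\<^sup>2 + \<epsilon>\<^sup>2) has_real_derivative (2 * (\<Sum>i\<in>UNIV. r i \<tau> * (G i (\<theta> \<tau>) \<bullet> th' \<tau>)))) (at \<tau> within {0..})"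
        unfolding rn2
        apply (rule DERIV_cong)
         apply (rule DERIV_add[OF DERIV_sum DERIV_const])
         apply (rule DERIV_power[OF dr[OF that]])
        apply (simp add: sum_distrib_left algebra_simps)
        done
      have dNr: "(Nr has_real_derivative (inverse (Nr \<tau>) / 2 * (2 * (\<Sum>i\<in>UNIV. r i \<tau> * (G i (\<theta> \<tau>) \<bullet> th' \<tau>))))) (at \<tau> within {0..})"
        using DERIV_chain2[OF DERIV_real_sqrt[OF Nrp] drr] unfolding Nr_def[abs_def] by simp
      have de1: "((\<lambda>x. exp (l * x)) has_real_derivative exp (l * \<tau>) * (l * 1)) (at \<tau> within {0..})"
        by (rule DERIV_chain2[OF DERIV_exp DERIV_cmult[OF DERIV_ident]])
      have deL: "((\<lambda>x. exp (L * l * x)) has_real_derivative exp (L * l * \<tau>) * (L * l * 1)) (at \<tau> within {0..})"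
        by (rule DERIV_chain2[OF DERIV_exp DERIV_cmult[OF DERIV_ident]])
      note t1 = DERIV_mult[OF de1 dNw]
      note t2 = DERIV_cmult[OF DERIV_mult[OF deL dNr], of c]
      note t3 = DERIV_cmult[OF deL, of "c * yn"]
      note t4 = DERIV_cmult[OF DERIV_ident, of "\<epsilon> * K" \<tau> "{0..}"]
      note all = DERIV_diff[OF DERIV_diff[OF DERIV_add[OF t1 t2] t3] t4]
      have e1: "inverse (Nw \<tau>) / 2 * (2 * (w \<tau> \<bullet> w' \<tau>) + 0) = (w \<tau> \<bullet> w' \<tau>) / Nw \<tau>"
        by (rule inv_half_1)
      have e2: "inverse (Nr \<tau>) / 2 * (2 * (\<Sum>i\<in>UNIV. r i \<tau> * (G i (\<theta> \<tau>) \<bullet> th' \<tau>))) = (\<Sum>i\<in>UNIV. r i \<tau> * (G i (\<theta> \<tau>) \<bullet> th' \<tau>)) / Nr \<tau>"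
        by (rule inv_half_2)
      show ?thesis unfolding D_def[abs_def]
        apply (rule DERIV_cong[OF all])
        unfolding e1 e2 D'_def by (simp add: ring_distribs mult_ac)
    qed
    have D'le: "D' \<tau> \<le> 0" if \<tau>: "0 < \<tau>" "\<tau> < t" for \<tau>
    proof -
      define ph where "ph = (exp (l * \<tau>) / \<alpha>) *\<^sub>R \<theta> \<tau>"
      have ph: "norm (ph - th0) < \<delta>" unfolding ph_def using ball[OF \<tau>] .
      have "s \<tau> * (exp (l * \<tau>) / \<alpha>) = 1" unfolding s_def using \<alpha> by (simp add: exp_minus field_simps)
      then have thph: "\<theta> \<tau> = s \<tau> *\<^sub>R ph" unfolding ph_def by (simp only: scaleR_scaleR scaleR_one)
      have sigp: "\<sigma> \<tau> > 0" unfolding \<sigma>_def using spos[of \<tau>] by simp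
      have Gs: "G i (\<theta> \<tau>) = \<sigma> \<tau> *\<^sub>R G i ph" for i unfolding thph \<sigma>_def using Ghom spos by blast
      define rv where "rv = (\<chi> i. r i \<tau>)"
      have Vs: "V \<tau> = \<sigma> \<tau> *\<^sub>R (\<Sum>i\<in>UNIV. rv $ i *\<^sub>R G i ph)"
        unfolding V_def Gs rv_def by (simp add: scaleR_sum_right mult.commute)
      have rvn: "norm rv = rn \<tau>" unfolding rv_def rn_eq ..
      have As: "A \<tau> = \<sigma> \<tau> * norm (\<Sum>i\<in>UNIV. rv $ i *\<^sub>R G i ph)" unfolding A_def Vs using sigp by simp
      have bb: "\<nu> * rn \<tau> \<le> norm (\<Sum>i\<in>UNIV. rv $ i *\<^sub>R G i ph)" "norm (\<Sum>i\<in>UNIV. rv $ i *\<^sub>R G i ph) \<le> M * rn \<tau>"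
        using bnd[OF ph, of rv] rvn by auto
      have Al: "\<nu> * \<sigma> \<tau> * rn \<tau> \<le> A \<tau>"
        unfolding As using mult_left_mono[OF bb(1), of "\<sigma> \<tau>"] sigp by (simp add: mult_ac)
      have Au: "A \<tau> \<le> M * \<sigma> \<tau> * rn \<tau>"
        unfolding As using mult_left_mono[OF bb(2), of "\<sigma> \<tau>"] sigp by (simp add: mult_ac)
      have A0: "A \<tau> \<ge> 0" unfolding A_def by simp
      define wn where "wn = norm (w \<tau>)"
      have wn0: "wn \<ge> 0" unfolding wn_def by simp
      have Nw_eq: "Nw \<tau> = sqrt (wn\<^sup>2 + \<epsilon>\<^sup>2)" unfolding Nw_def wn_def ..
      note sw = sqrt_facts[OF \<epsilon> wn0, folded Nw_eq]
      have Nwpos: "Nw \<tau> > 0" using sw(2) \<epsilon> by linarith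
      have wweq: "w \<tau> \<bullet> w' \<tau> = (2/n) * (- (w \<tau> \<bullet> V \<tau>)) - l * wn\<^sup>2"
        unfolding w'_def wn_def by (simp add: inner_add_right inner_diff_right power2_norm_eq_inner)
      have "(- w \<tau>) \<bullet> V \<tau> \<le> norm (- w \<tau>) * norm (V \<tau>)" by (rule norm_cauchy_schwarz)
      then have cs: "- (w \<tau> \<bullet> V \<tau>) \<le> wn * A \<tau>" unfolding wn_def A_def by simp
      have "(2/n) * (- (w \<tau> \<bullet> V \<tau>)) \<le> (2/n) * (wn * A \<tau>)" by (rule mult_left_mono[OF cs]) (use n in simp)
      then have ww: "w \<tau> \<bullet> w' \<tau> \<le> (2/n)*wn*A \<tau> - l*wn\<^sup>2" unfolding wweq by (simp add: mult_ac)
      have X1: "(w \<tau> \<bullet> w' \<tau>) / Nw \<tau> \<le> (2/n)*A \<tau> - l*(Nw \<tau> - \<epsilon>)"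
        by (rule term1[OF n l Nwpos wn0 A0 sw(1) sw(4) ww])
      define ry where "ry = (\<Sum>i\<in>UNIV. r i \<tau> * y i)"
      have Nr_eq: "Nr \<tau> = sqrt ((rn \<tau>)\<^sup>2 + \<epsilon>\<^sup>2)" unfolding Nr_def ..
      note sr = sqrt_facts[OF \<epsilon> rnn[of \<tau>], folded Nr_eq]
      have Nrpos: "Nr \<tau> > 0" using sr(2) \<epsilon> by linarith
      have rn2: "(rn \<tau>)\<^sup>2 = (\<Sum>i\<in>UNIV. (r i \<tau>)\<^sup>2)" unfolding rn_def by (simp add: sum_nonneg)
      have Ssum: "(\<Sum>i\<in>UNIV. r i \<tau> * (G i (\<theta> \<tau>) \<bullet> th' \<tau>)) = V \<tau> \<bullet> th' \<tau>"
        unfolding V_def by (simp add: inner_sum_left)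
      have Vth: "V \<tau> \<bullet> \<theta> \<tau> = L * ((rn \<tau>)\<^sup>2 + ry)"
      proof -
        have "V \<tau> \<bullet> \<theta> \<tau> = (\<Sum>i\<in>UNIV. r i \<tau> * (G i (\<theta> \<tau>) \<bullet> \<theta> \<tau>))"
          unfolding V_def by (simp add: inner_sum_left)
        also have "\<dots> = (\<Sum>i\<in>UNIV. L * ((r i \<tau>)\<^sup>2 + r i \<tau> * y i))"
          unfolding euler by (intro sum.cong refl) (simp add: r_def power2_eq_square algebra_simps)
        also have "\<dots> = L * ((rn \<tau>)\<^sup>2 + ry)" unfolding rn2 ry_def
          by (simp only: distrib_left sum.distrib sum_distrib_left)
        finally show ?thesis .
      qed
      have Seq: "(\<Sum>i\<in>UNIV. r i \<tau> * (G i (\<theta> \<tau>) \<bullet> th' \<tau>)) = -(2/n)*(A \<tau>)\<^sup>2 - l*L*((rn \<tau>)\<^sup>2 + ry)"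
      proof -
        have "V \<tau> \<bullet> th' \<tau> = -(2/n)*(A \<tau>)\<^sup>2 - l*L*((rn \<tau>)\<^sup>2 + ry)"
          unfolding th'_def using Vth unfolding A_def
          by (simp add: inner_add_right inner_diff_right power2_norm_eq_inner)
        then show ?thesis using Ssum by simp
      qed
      have ryb: "ry \<ge> - (rn \<tau> * yn)"
      proof -
        have "(- rv) \<bullet> (\<chi> i. y i) \<le> norm (- rv) * norm (\<chi> i. y i)" by (rule norm_cauchy_schwarz)
        moreover have "(- rv) \<bullet> (\<chi> i. y i) = - ry" unfolding rv_def ry_def inner_vec_def by (simp add: sum_negf)
        ultimately show ?thesis using rvn unfolding yn_def by simp
      qed
      have X2: "(\<Sum>i\<in>UNIV. r i \<tau> * (G i (\<theta> \<tau>) \<bullet> th' \<tau>)) / Nr \<tau> \<le>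
          -(2/n)*\<nu>*\<sigma> \<tau>*A \<tau> + (2/n)*\<nu>*M*(\<sigma> \<tau>)\<^sup>2*\<epsilon> - l*L*(Nr \<tau> - \<epsilon>) + l*L*yn"
      proof (rule term2[OF n l _ Nrpos rnn \<nu> sigp M ynn \<epsilon> Seq ryb Al Au sr(1)])
        show "L \<ge> 0" using Lpos by simp
        show "Nr \<tau> - rn \<tau> \<le> \<epsilon>" using sr(3) by linarith
        show "Nr \<tau> - \<epsilon> \<le> (rn \<tau>)\<^sup>2 / Nr \<tau>" by (rule sr(4))
      qed
      have h3: "c * exp (L * l * \<tau>) * \<nu> * \<sigma> \<tau> = exp (l * \<tau>)"
      proof -
        have "c * \<nu> = \<alpha> powr (1 - L)" unfolding c_def using \<nu> by simp
        moreover have "\<sigma> \<tau> = exp ((L - 1) * (ln \<alpha> - l * \<tau>))"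
          unfolding \<sigma>_def s_def using \<alpha> by (simp add: powr_def ln_mult)
        moreover have "\<alpha> powr (1 - L) = exp ((1 - L) * ln \<alpha>)" using \<alpha> by (simp add: powr_def)
        ultimately have "c * exp (L * l * \<tau>) * \<nu> * \<sigma> \<tau> = exp ((1 - L) * ln \<alpha>) * exp (L * l * \<tau>) * exp ((L - 1) * (ln \<alpha> - l * \<tau>))"
          by (simp add: mult_ac)
        also have "\<dots> = exp ((1 - L) * ln \<alpha> + L * l * \<tau> + (L - 1) * (ln \<alpha> - l * \<tau>))" by (simp add: exp_add)
        also have "(1 - L) * ln \<alpha> + L * l * \<tau> + (L - 1) * (ln \<alpha> - l * \<tau>) = l * \<tau>" by (simp add: algebra_simps)
        finally show ?thesis .
      qed
      have hK: "exp (l * \<tau>) * l + c * exp (L * l * \<tau>) * ((2 / n) * \<nu> * M * (\<sigma> \<tau>)\<^sup>2) + c * exp (L * l * \<tau>) * (l * L) \<le> K"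
        using K[of \<tau>] \<tau> unfolding Bd_def by simp
      have cE: "c * exp (L * l * \<tau>) > 0" using cpos by simp
      show ?thesis unfolding D'_def
        by (rule final_arith[OF _ cE X1 X2 h3 hK \<epsilon>]) simp
    qed
    have "D t \<le> D 0"
    proof (rule DERIV_nonpos_imp_decreasing_open[OF t])
      fix x assume x: "0 < x" "x < t"
      have "x \<in> interior {0::real..}" using x by simp
      then have "(D has_real_derivative D' x) (at x)" using dD[of x] x at_within_interior by fastforce
      then show "\<exists>y. (D has_real_derivative y) (at x) \<and> y \<le> 0" using D'le[OF x] by blast
    next
      show "continuous_on {0..t} D"
        unfolding continuous_on_eq_continuous_within
      proof
        fix x assume "x \<in> {0..t}"
        then have "continuous (at x within {0..}) D" using dD DERIV_continuous by fastforce
        then show "continuous (at x within {0..t}) D" by (rule continuous_within_subset) auto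
      qed
    qed
    moreover have "D 0 \<le> \<epsilon> + c * \<epsilon>"
    proof -
      have "w 0 = 0" unfolding w_def s_def using init by simp
      then have "Nw 0 = \<epsilon>" unfolding Nw_def using \<epsilon> by simp
      have "rn 0 = yn" unfolding rn_def yn_eq r_def using init f0 by (simp add: power2_commute)
      then have "Nr 0 \<le> yn + \<epsilon>" unfolding Nr_def using sqrt_facts(3)[OF \<epsilon> ynn] by simp
      then have "c * Nr 0 \<le> c * (yn + \<epsilon>)" using cpos by (simp add: mult_left_mono)
      then show ?thesis unfolding D_def using \<open>Nw 0 = \<epsilon>\<close> by (simp add: algebra_simps)
    qed
    moreover have "exp (l * t) * norm (w t) - c * yn * exp (L * l * t) - \<epsilon> * K * t \<le> D t"
    proof -
      have "norm (w t) \<le> Nw t" unfolding Nw_def using sqrt_facts(1)[OF \<epsilon>] by simp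
      then have a: "exp (l * t) * norm (w t) \<le> exp (l * t) * Nw t" by (rule mult_left_mono) simp
      have b: "c * (exp (L * l * t) * Nr t) \<ge> 0" using cpos unfolding Nr_def by simp
      show ?thesis unfolding D_def using a b by linarith
    qed
    ultimately show ?thesis by (simp add: algebra_simps)
  qed
  have wt: "exp (l * t) * norm (w t) \<le> c * yn * exp (L * l * t)"
  proof (rule field_le_epsilon)
    fix e :: real assume e: "e > 0"
    define Q where "Q = 1 + c + K * t"
    have "K * t \<ge> 0" using Knn t by simp
    then have Q: "Q > 0" unfolding Q_def using cpos by linarith
    have "exp (l * t) * norm (w t) \<le> c * yn * exp (L * l * t) + (e / Q) * Q"
      using main_eps[of "e / Q"] e Q unfolding Q_def by simp
    then show "exp (l * t) * norm (w t) \<le> c * yn * exp (L * l * t) + e" using Q by simp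
  qed
  have eq: "(exp (l * t) / \<alpha>) *\<^sub>R \<theta> t - th0 = (exp (l * t) / \<alpha>) *\<^sub>R w t"
  proof -
    have "(exp (l * t) / \<alpha>) * s t = 1" unfolding s_def using \<alpha> by (simp add: exp_minus field_simps)
    then have "(exp (l * t) / \<alpha>) *\<^sub>R (s t *\<^sub>R th0) = th0" by (simp only: scaleR_scaleR scaleR_one)
    then show ?thesis unfolding w_def by (simp add: scaleR_diff_right)
  qed
  have "norm ((exp (l * t) / \<alpha>) *\<^sub>R \<theta> t - th0) = (exp (l * t) * norm (w t)) / \<alpha>"
    unfolding eq using \<alpha> by simp
  also have "\<dots> \<le> c * yn * exp (L * l * t) / \<alpha>" using wt \<alpha> by (simp add: divide_right_mono)
  also have "\<dots> = (yn / \<nu>) * \<alpha> powr (- L) * exp (L * l * t)"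
  proof -
    have "\<alpha> powr (1 - L) = \<alpha> * \<alpha> powr (- L)" using \<alpha> powr_add[of \<alpha> 1 "- L"] by simp
    then show ?thesis unfolding c_def using \<alpha> by (simp add: field_simps)
  qed
  finally show ?thesis unfolding yn_def .
qed



theorem lemmaD2:
  fixes f :: "'a::euclidean_space \<Rightarrow> 'x \<Rightarrow> real"
    and xs :: "'i::finite \<Rightarrow> 'x" and ys :: "'i \<Rightarrow> real"
    and L p eps_max :: real
    and lam :: "real \<Rightarrow> real"
    and thinit :: 'a
    and theta :: "real \<Rightarrow> real \<Rightarrow> 'a"
  assumes C2: "\<And>x. C2 (\<lambda>th. f th x)"
    and hom: "\<And>x. homogeneous L (\<lambda>th. f th x)"
    and L_pos: "L > 0"
    and init_zero: "\<And>x. f thinit x = 0"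
    and p_pos: "p > 0"
    and lam_pos: "\<And>alpha. alpha > 0 \<Longrightarrow> lam alpha > 0"
    and lam_Theta: "lam \<in> \<Theta>(\<lambda>alpha. alpha powr (- p))"
    and lin_indep: "\<not> dependent (range (\<lambda>i. grad (\<lambda>th. f th (xs i)) thinit))"
    and inj_grad: "inj (\<lambda>i. grad (\<lambda>th. f th (xs i)) thinit)"
    and ntk_pos: "min_eig (ntk f xs thinit) > 0"
    and eps_pos: "eps_max > 0"
    and eps_prop: "\<And>th. norm (th - thinit) < eps_max \<Longrightarrow>
                      min_eig (ntk f xs th) > min_eig (ntk f xs thinit) / 2"
    and flow: "\<And>alpha t. alpha > 0 \<Longrightarrow> t \<ge> 0 \<Longrightarrow>
        (theta alpha has_vector_derivative
           - grad (regloss f xs ys (lam alpha)) (theta alpha t)) (at t within {0..})"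
    and flow_init: "\<And>alpha. alpha > 0 \<Longrightarrow> theta alpha 0 = alpha *\<^sub>R thinit"
  shows "\<exists>DeltaT C alpha0. \<forall>alpha \<ge> alpha0. alpha > 0 \<and>
           ereal ((ln alpha + DeltaT) / lam alpha) \<le> Tmax (lam alpha) alpha (theta alpha) thinit eps_max
         \<and> (\<forall>t. 0 \<le> t \<and> t \<le> (ln alpha + DeltaT) / lam alpha \<longrightarrow>
              norm ((exp (lam alpha * t) / alpha) *\<^sub>R theta alpha t - thinit)
                \<le> C * alpha powr (- L) * exp (L * lam alpha * t))"
proof -
  define G where "G i = grad (\<lambda>th. f th (xs i))" for i
  define fi where "fi i = (\<lambda>th. f th (xs i))" for i
  have fder: "\<And>i x. (fi i has_derivative (\<lambda>h. G i x \<bullet> h)) (at x)"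
    unfolding fi_def G_def using C2_grad(1)[OF C2] by blast
  have Gcont: "\<And>i. continuous_on UNIV (G i)"
    unfolding G_def using C2_grad(2)[OF C2] by blast
  obtain \<delta>0 \<nu> M where d0: "\<delta>0 > 0" and \<nu>: "\<nu> > 0" and M: "M > 0"
    and bnd0: "\<And>ph v. norm (ph - thinit) < \<delta>0 \<Longrightarrow>
      \<nu> * norm v \<le> norm (\<Sum>i\<in>UNIV. v $ i *\<^sub>R G i ph) \<and> norm (\<Sum>i\<in>UNIV. v $ i *\<^sub>R G i ph) \<le> M * norm v"
    using indep_bound[of G thinit] Gcont lin_indep inj_grad unfolding G_def by blast
  define \<delta> where "\<delta> = min \<delta>0 eps_max"
  have \<delta>: "\<delta> > 0" "\<delta> \<le> \<delta>0" "\<delta> \<le> eps_max" unfolding \<delta>_def using d0 eps_pos by auto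
  have bnd: "\<And>ph v. norm (ph - thinit) < \<delta> \<Longrightarrow>
      \<nu> * norm v \<le> norm (\<Sum>i\<in>UNIV. v $ i *\<^sub>R G i ph) \<and> norm (\<Sum>i\<in>UNIV. v $ i *\<^sub>R G i ph) \<le> M * norm v"
    using bnd0 \<delta>(2) by force
  define C where "C = norm (\<chi> i. ys i) / \<nu>"
  have C0: "C \<ge> 0" unfolding C_def using \<nu> by simp
  define DT where "DT = (ln (\<delta> / 2) - ln (C + 1)) / L"
  have CDT: "C * exp (L * DT) < \<delta>"
  proof -
    have "exp (L * DT) = (\<delta> / 2) / (C + 1)" unfolding DT_def using L_pos \<delta>(1) C0
      by (simp add: exp_diff)
    then have "C * exp (L * DT) = (\<delta> / 2) * (C / (C + 1))" by simp
    also have "\<dots> \<le> \<delta> / 2" using C0 \<delta>(1) by (intro mult_left_le) auto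
    also have "\<dots> < \<delta>" using \<delta>(1) by simp
    finally show ?thesis .
  qed
  have main: "alpha > 0 \<and>
           ereal ((ln alpha + DT) / lam alpha) \<le> Tmax (lam alpha) alpha (theta alpha) thinit eps_max
         \<and> (\<forall>t. 0 \<le> t \<and> t \<le> (ln alpha + DT) / lam alpha \<longrightarrow>
              norm ((exp (lam alpha * t) / alpha) *\<^sub>R theta alpha t - thinit)
                \<le> C * alpha powr (- L) * exp (L * lam alpha * t))" if a1: "alpha \<ge> 1" for alpha
  proof -
    have \<alpha>: "alpha > 0" using a1 by simp
    define l where "l = lam alpha"
    have l: "l > 0" unfolding l_def using lam_pos[OF \<alpha>] .
    define th where "th = theta alpha"
    define T0 where "T0 = (ln alpha + DT) / l"
    define \<phi> where "\<phi> t = (exp (l * t) / alpha) *\<^sub>R th t" for t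
    define B where "B t = C * alpha powr (- L) * exp (L * l * t)" for t
    have flow': "(th has_vector_derivative - ((2 / real CARD('i)) *\<^sub>R (\<Sum>i\<in>UNIV. (fi i (th \<tau>) - ys i) *\<^sub>R G i (th \<tau>)) + l *\<^sub>R th \<tau>)) (at \<tau> within {0..})"
      if "\<tau> \<ge> 0" for \<tau>
    proof -
      have g: "grad (regloss f xs ys (lam alpha)) (theta alpha \<tau>) = (2 / real CARD('i)) *\<^sub>R (\<Sum>i\<in>UNIV. (f (theta alpha \<tau>) (xs i) - ys i) *\<^sub>R grad (\<lambda>th. f th (xs i)) (theta alpha \<tau>)) + lam alpha *\<^sub>R theta alpha \<tau>"
        by (rule regloss_grad) (rule C2)
      show ?thesis using flow[OF \<alpha> that] unfolding g fi_def G_def th_def l_def by simp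
    qed
    have Ghom: "\<And>i c x. c > 0 \<Longrightarrow> G i (c *\<^sub>R x) = c powr (L - 1) *\<^sub>R G i x"
      unfolding G_def using grad_hom[OF C2 hom] by blast
    have eul: "\<And>i x. G i x \<bullet> x = L * fi i x"
      unfolding G_def fi_def using euler[OF C2 hom] by blast
    have f0: "\<And>i. fi i (alpha *\<^sub>R thinit) = 0"
      unfolding fi_def using hom \<alpha> init_zero unfolding homogeneous_def by simp
    have init: "th 0 = alpha *\<^sub>R thinit" unfolding th_def using flow_init[OF \<alpha>] .
    have est: "norm (\<phi> t - thinit) \<le> B t"
      if "t \<ge> 0" "\<And>\<tau>. 0 < \<tau> \<Longrightarrow> \<tau> < t \<Longrightarrow> norm (\<phi> \<tau> - thinit) < \<delta>" for t
      using main_est[OF \<alpha> l \<nu> M L_pos fder Ghom eul f0 flow' init bnd that(1)] that(2)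
      unfolding \<phi>_def B_def C_def by blast
    have Blt: "B t < \<delta>" if "t \<le> T0" for t
    proof -
      have "exp (L * l * t) \<le> exp (L * l * T0)" using that L_pos l by (simp add: mult_left_mono)
      then have "B t \<le> B T0" unfolding B_def using C0 by (simp add: mult_left_mono)
      also have "B T0 = C * exp (L * DT)"
      proof -
        have "L * l * T0 = L * ln alpha + L * DT" unfolding T0_def using l by (simp add: field_simps)
        moreover have "alpha powr (- L) = exp (- L * ln alpha)" using \<alpha> by (simp add: powr_def)
        ultimately show ?thesis unfolding B_def by (simp add: exp_add[symmetric] mult.assoc)
      qed
      finally show ?thesis using CDT by linarith
    qed
    have cth: "continuous_on {0..} th"
      unfolding continuous_on_eq_continuous_within
      using flow' has_vector_derivative_continuous by blast
    have c\<phi>: "continuous_on {0..T0} (\<lambda>t. norm (\<phi> t - thinit))"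
      unfolding \<phi>_def
      by (intro continuous_intros continuous_on_subset[OF cth]) (use \<alpha> in auto)
    have good: "norm (\<phi> t - thinit) < \<delta>" if "0 \<le> t" "t \<le> T0" for t
    proof (rule ccontr)
      assume bad: "\<not> norm (\<phi> t - thinit) < \<delta>"
      define Sb where "Sb = {0..T0} \<inter> (\<lambda>t. norm (\<phi> t - thinit)) -` {\<delta>..}"
      have tS: "t \<in> Sb" unfolding Sb_def using that bad by auto
      have cS: "closed Sb" unfolding Sb_def
        by (rule continuous_closed_preimage[OF c\<phi> closed_atLeastAtMost closed_atLeast])
      have bS: "bdd_below Sb" unfolding Sb_def by (rule bdd_belowI[of _ 0]) auto
      define t1 where "t1 = Inf Sb"
      have t1S: "t1 \<in> Sb" unfolding t1_def using closed_contains_Inf[OF _ bS cS] tS by blast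
      then have t1: "0 \<le> t1" "t1 \<le> T0" "norm (\<phi> t1 - thinit) \<ge> \<delta>" unfolding Sb_def by auto
      have "norm (\<phi> \<tau> - thinit) < \<delta>" if "0 < \<tau>" "\<tau> < t1" for \<tau>
      proof (rule ccontr)
        assume "\<not> norm (\<phi> \<tau> - thinit) < \<delta>"
        then have "\<tau> \<in> Sb" unfolding Sb_def using that t1 by auto
        then have "t1 \<le> \<tau>" unfolding t1_def by (rule cInf_lower[OF _ bS])
        then show False using that by simp
      qed
      then have "norm (\<phi> t1 - thinit) \<le> B t1" using est[OF t1(1)] by blast
      then show False using Blt[OF t1(2)] t1(3) by linarith
    qed
    have bound: "norm (\<phi> t - thinit) \<le> B t" if "0 \<le> t" "t \<le> T0" for t
      using est[OF that(1)] good that by force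
    have tmax: "ereal T0 \<le> Tmax l alpha th thinit eps_max"
      unfolding Tmax_def
    proof (rule Inf_greatest)
      fix x assume "x \<in> ereal ` {t. 0 \<le> t \<and> eps_max < norm ((exp (l * t) / alpha) *\<^sub>R th t - thinit)}"
      then obtain t where t: "x = ereal t" "0 \<le> t" "eps_max < norm (\<phi> t - thinit)"
        unfolding \<phi>_def by auto
      have "T0 < t"
      proof (rule ccontr)
        assume "\<not> T0 < t"
        then have "norm (\<phi> t - thinit) < \<delta>" using good t(2) by simp
        then show False using t(3) \<delta>(3) by linarith
      qed
      then show "ereal T0 \<le> x" using t(1) by simp
    qed
    show ?thesis
      using \<alpha> tmax bound unfolding T0_def l_def th_def \<phi>_def B_def by blast
  qed
  show ?thesis by (rule exI[of _ DT], rule exI[of _ C], rule exI[of _ 1]) (use main in blast)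
qed


end
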